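(* Consider two phases indexed by $\{1,2\}$ and a cell interface $x_{i+\frac12}$ separating a left cell $i$ and a right cell $i+1$. For $a,b\in\{1,2\}$ let $\mathcal{P}_{i+\frac12}[\Sigma_a,\Sigma_b]$ denote the probability of the event that phase $a$ is present immediately to the left of $x_{i+\frac12}$ and phase $b$ is present immediately to the right of $x_{i+\frac12}$ (exactly one phase is present on each side in every realization). Let $\alpha_j^p$, $p\in\{1,2\}$, $j\in\{i,i+1\}$, satisfy the saturation condition $\alpha_j^p\in[0,1]$, $\alpha_j^1+\alpha_j^2=1$, and assume that for every $p\neq q\in\{1,2\}$ $$\mathcal{P}_{i+\frac12}[\Sigma_p,\Sigma_p]+\mathcal{P}_{i+\frac12}[\Sigma_p,\Sigma_q]=\alpha_i^p,\qquad \mathcal{P}_{i+\frac12}[\Sigma_p,\Sigma_p]+\mathcal{P}_{i+\frac12}[\Sigma_q,\Sigma_p]=\alpha_{i+1}^p .$$ Then there exists $r\in[0,1]$, the same for $p=1$ and $p=2$, such that for every $p\neq q\in\{1,2\}$ $$\mathcal{P}_{i+\frac12}[\Sigma_p,\Sigma_p]=r\max(\alpha_i^p-\alpha_{i+1}^q,0)+(1-r)\min(\alpha_i^p,\alpha_{i+1}^p),$$ $$\mathcal{P}_{i+\frac12}[\Sigma_p,\Sigma_q]=r\min(\alpha_i^p,\alpha_{i+1}^q)+(1-r)\max(\alpha_i^p-\alpha_{i+1}^p,0).$$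
   Context: This arises in the Discrete Equation Method for two-phase flow: $\alpha_j^p$ is the (ensemble-averaged) volume fraction of phase $p$ in cell $j$, and the parameter $r$ may depend on the interface location and time but not on the phase index. The pair $(\min(\alpha_i^p,\alpha_{i+1}^p),\max(\alpha_i^p-\alpha_{i+1}^p,0))$ corresponds to stratified flow and $(\max(\alpha_i^p-\alpha_{i+1}^q,0),\min(\alpha_i^p,\alpha_{i+1}^q))$ to disperse flow. *)

theory Defs
  imports "HOL-Probability.Probability"
begin

text \<open>Phases are the naturals 1 and 2. In a realization w, L w is the phase present
immediately to the left of the interface and R w the phase immediately to the right.\<close>

definition Pint :: "'w measure \<Rightarrow> ('w \<Rightarrow> nat) \<Rightarrow> ('w \<Rightarrow> nat) \<Rightarrow> nat \<Rightarrow> nat \<Rightarrow> real" where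
  "Pint M L R a b = measure M {w \<in> space M. L w = a \<and> R w = b}"

end

theory Submission
  imports Defs
begin

lemma key:
  fixes a b c d x y :: real
  assumes "a \<ge> 0" "b \<ge> 0" "c \<ge> 0" "d \<ge> 0"
    and "a + b = x" "a + c = y" "d + c = 1 - x" "d + b = 1 - y"
  shows "\<exists>r\<in>{0..1::real}.
     a = r * max (x - (1 - y)) 0 + (1 - r) * min x y \<and>
     b = r * min x (1 - y) + (1 - r) * max (x - y) 0 \<and>
     d = r * max ((1 - x) - y) 0 + (1 - r) * min (1 - x) (1 - y) \<and>
     c = r * min (1 - x) y + (1 - r) * max ((1 - x) - (1 - y)) 0"
proof -
  define lo where "lo = max (x + y - 1) 0"
  define hi where "hi = min x y"
  have lh: "lo \<le> a" "a \<le> hi" using assms unfolding lo_def hi_def by auto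
  show ?thesis
  proof (cases "lo = hi")
    case True
    then have "a = hi" using lh by simp
    then show ?thesis using True assms unfolding lo_def hi_def
      by (intro bexI[of _ 0]) (auto simp: max_def min_def split: if_splits)
  next
    case False
    then have lt: "lo < hi" using lh by simp
    define r where "r = (hi - a) / (hi - lo)"
    have r01: "r \<in> {0..1}" using lh lt unfolding r_def by (auto simp: field_simps)
    have rr: "r * (hi - lo) = hi - a" using lt unfolding r_def by simp
    have ar: "a = r * lo + (1 - r) * hi" using rr by (simp add: algebra_simps)
    have e1: "max (x - (1 - y)) 0 = lo" unfolding lo_def by simp
    have e2: "min x (1 - y) = x - lo" unfolding lo_def by (auto simp: max_def min_def)
    have e3: "max (x - y) 0 = x - hi" unfolding hi_def by (auto simp: max_def min_def)
    have e4: "max ((1 - x) - y) 0 = 1 - x - y + lo" unfolding lo_def by (auto simp: max_def)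
    have e5: "min (1 - x) (1 - y) = 1 - x - y + hi" unfolding hi_def by (auto simp: min_def)
    have e6: "min (1 - x) y = y - lo" unfolding lo_def by (auto simp: max_def min_def)
    have e7: "max ((1 - x) - (1 - y)) 0 = y - hi" unfolding hi_def by (auto simp: max_def min_def)
    show ?thesis
      apply (rule bexI[OF _ r01])
      unfolding e1 e2 e3 e4 e5 e6 e7 hi_def[symmetric]
      using ar assms by (auto simp: algebra_simps)
  qed
qed

theorem theorem1:
  fixes M :: "'w measure" and L R :: "'w \<Rightarrow> nat"
    and aL aR :: "nat \<Rightarrow> real"
  assumes "prob_space M"
    and "L \<in> measurable M (count_space UNIV)"
    and "R \<in> measurable M (count_space UNIV)"
    and "\<forall>w\<in>space M. L w \<in> {1,2} \<and> R w \<in> {1,2}"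
    and "\<forall>p\<in>{1,2}. aL p \<in> {0..1} \<and> aR p \<in> {0..1}"
    and "aL 1 + aL 2 = 1" and "aR 1 + aR 2 = 1"
    and "\<forall>p\<in>{1,2}. \<forall>q\<in>{1,2}. p \<noteq> q \<longrightarrow>
           Pint M L R p p + Pint M L R p q = aL p \<and>
           Pint M L R p p + Pint M L R q p = aR p"
  shows "\<exists>r\<in>{0..1::real}. \<forall>p\<in>{1,2}. \<forall>q\<in>{1,2}. p \<noteq> q \<longrightarrow>
           Pint M L R p p = r * max (aL p - aR q) 0 + (1 - r) * min (aL p) (aR p) \<and>
           Pint M L R p q = r * min (aL p) (aR q) + (1 - r) * max (aL p - aR p) 0"
proof -
  have nn: "\<And>a b. Pint M L R a b \<ge> 0" unfolding Pint_def by simp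
  have h: "Pint M L R 1 1 + Pint M L R 1 2 = aL 1" "Pint M L R 1 1 + Pint M L R 2 1 = aR 1"
     "Pint M L R 2 2 + Pint M L R 2 1 = aL 2" "Pint M L R 2 2 + Pint M L R 1 2 = aR 2"
    using assms(8) by auto
  have l2: "aL 2 = 1 - aL 1" "aR 2 = 1 - aR 1" using assms(6,7) by auto
  obtain r where r: "r \<in> {0..1::real}"
    "Pint M L R 1 1 = r * max (aL 1 - (1 - aR 1)) 0 + (1 - r) * min (aL 1) (aR 1)"
    "Pint M L R 1 2 = r * min (aL 1) (1 - aR 1) + (1 - r) * max (aL 1 - aR 1) 0"
    "Pint M L R 2 2 = r * max ((1 - aL 1) - aR 1) 0 + (1 - r) * min (1 - aL 1) (1 - aR 1)"
    "Pint M L R 2 1 = r * min (1 - aL 1) (aR 1) + (1 - r) * max ((1 - aL 1) - (1 - aR 1)) 0"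
    using key[where a="Pint M L R 1 1" and b="Pint M L R 1 2" and c="Pint M L R 2 1" and d="Pint M L R 2 2" and x="aL 1" and y="aR 1", OF nn nn nn nn] h l2 by auto
  show ?thesis
    apply (rule bexI[OF _ r(1)])
    using r l2 by auto
qed

end
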